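(* Let $\varepsilon>0$ be a constant, $m=m(n)=n^{1+\varepsilon}$ and $\mu=\mu(n)=n^{-\varepsilon}$. Suppose that for every $n$ there is a matrix $A_n\in\mathbb{F}_2^{m\times n}$ such that there is no family of polynomial-size non-uniform nondeterministic circuits $C:\{0,1\}^m\to\{0,1\}$ that accepts a constant fraction of uniformly random strings in $\{0,1\}^m$ but rejects every string of the form $A_n\vec{s}+\vec{e}$ with $\vec{s}\in\mathbb{F}_2^n$ and $\vec{e}\in\mathbb{F}_2^m$ of Hamming weight at most $\mu m$. Then there exist constants $\varepsilon'>0$, $d\ge2$ and a (non-uniformly computable) family of demi-bits generators $\{g_n:\{0,1\}^n\to\{0,1\}^{n^{1+\varepsilon'}}\}$ secure against $\mathbf{NP}/\mathrm{poly}$ such that each output bit of $g_n$ is computable by a polynomial of degree $d$ over $\mathbb{F}_2$.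
   Context: A family $\{g_n:\{0,1\}^n\to\{0,1\}^{N(n)}\}$ with $N(n)>n$, computable by polynomial-size circuits, is a demi-bits generator secure against $\mathbf{NP}/\mathrm{poly}$ if there is no family of polynomial-size nondeterministic circuits $D$ that accepts a constant fraction of $y\in\{0,1\}^{N}$ while rejecting every $y\in\mathrm{Range}(g_n)$ (for all sufficiently large $n$). *)

theory Defs
  imports Complex_Main
begin

text \<open>Boolean circuits as straight-line programs over the basis AND/OR/NOT.
  Strings in {0,1}^k are bool lists of length k (True = 1).\<close>

datatype gate = Input nat | Const bool | Neg nat | And nat nat | Or nat nat

definition wire :: "bool list \<Rightarrow> nat \<Rightarrow> bool" where
  "wire vs j = (if j < length vs then vs ! j else False)"

fun gate_val :: "bool list \<Rightarrow> bool list \<Rightarrow> gate \<Rightarrow> bool" where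
  "gate_val x vs (Input i) = wire x i"
| "gate_val x vs (Const b) = b"
| "gate_val x vs (Neg j) = (\<not> wire vs j)"
| "gate_val x vs (And j k) = (wire vs j \<and> wire vs k)"
| "gate_val x vs (Or j k) = (wire vs j \<or> wire vs k)"

text \<open>Values of all wires (gate i may only read wires j < i).\<close>
definition wire_vals :: "gate list \<Rightarrow> bool list \<Rightarrow> bool list" where
  "wire_vals gs x = foldl (\<lambda>vs g. vs @ [gate_val x vs g]) [] gs"

definition circ_eval :: "gate list \<Rightarrow> bool list \<Rightarrow> bool" where
  "circ_eval gs x = (gs \<noteq> [] \<and> last (wire_vals gs x))"

text \<open>Multi-output circuit: gates plus a list of output wires; size = number of gates.\<close>
definition mcirc_eval :: "gate list \<times> nat list \<Rightarrow> bool list \<Rightarrow> bool list" where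
  "mcirc_eval C x = map (wire (wire_vals (fst C) x)) (snd C)"

definition nd_accepts :: "gate list \<times> nat \<Rightarrow> bool list \<Rightarrow> bool" where
  "nd_accepts D y = (\<exists>w. length w = snd D \<and> circ_eval (fst D) (y @ w))"

definition nd_size :: "gate list \<times> nat \<Rightarrow> nat" where
  "nd_size D = length (fst D) + snd D"

definition strings :: "nat \<Rightarrow> bool list set" where
  "strings k = {y. length y = k}"

definition accept_frac :: "gate list \<times> nat \<Rightarrow> nat \<Rightarrow> real" where
  "accept_frac D k = real (card {y \<in> strings k. nd_accepts D y}) / 2 ^ k"

definition poly_bounded :: "(nat \<Rightarrow> nat) \<Rightarrow> bool" where
  "poly_bounded s = (\<exists>c::nat. \<forall>n. s n \<le> c * (n + 1) ^ c)"

definition hard_NPpoly :: "(nat \<Rightarrow> nat) \<Rightarrow> (nat \<Rightarrow> bool list set) \<Rightarrow> bool" where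
  "hard_NPpoly N R = (\<not> (\<exists>(D :: nat \<Rightarrow> gate list \<times> nat) (\<delta>::real).
      poly_bounded (\<lambda>n. nd_size (D n)) \<and> \<delta> > 0 \<and>
      (\<forall>\<^sub>F n in sequentially. accept_frac (D n) (N n) \<ge> \<delta> \<and>
                               (\<forall>y \<in> R n. \<not> nd_accepts (D n) y))))"

definition demi_bits_gen :: "(nat \<Rightarrow> bool list \<Rightarrow> bool list) \<Rightarrow> (nat \<Rightarrow> nat) \<Rightarrow> bool" where
  "demi_bits_gen g N =
     ((\<forall>\<^sub>F n in sequentially. N n > n) \<and>
      (\<forall>n x. length x = n \<longrightarrow> length (g n x) = N n) \<and>
      (\<exists>C :: nat \<Rightarrow> gate list \<times> nat list.
          poly_bounded (\<lambda>n. length (fst (C n))) \<and>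
          (\<forall>n x. length x = n \<longrightarrow> mcirc_eval (C n) x = g n x)) \<and>
      hard_NPpoly N (\<lambda>n. g n ` strings n))"

text \<open>A polynomial over F_2 in variables x_0..x_{n-1} of degree at most d, in
  (multilinear) monomial form: a finite set of monomials, each a set of at most d
  variable indices; its value is the parity of the number of satisfied monomials.\<close>
definition f2_poly_deg :: "nat \<Rightarrow> nat \<Rightarrow> nat set set \<Rightarrow> bool" where
  "f2_poly_deg n d P = (P \<subseteq> Pow {0..<n} \<and> (\<forall>M \<in> P. card M \<le> d))"

definition f2_poly_eval :: "nat set set \<Rightarrow> bool list \<Rightarrow> bool" where
  "f2_poly_eval P x = odd (card {M \<in> P. \<forall>j \<in> M. x ! j})"

text \<open>LPN samples A s + e over F_2, with A given as a predicate A i j (entry in row i, column j).\<close>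
definition lin_F2 :: "(nat \<Rightarrow> nat \<Rightarrow> bool) \<Rightarrow> nat \<Rightarrow> nat \<Rightarrow> bool list \<Rightarrow> bool list \<Rightarrow> bool list" where
  "lin_F2 A m n s e = map (\<lambda>i. odd (card {j \<in> {0..<n}. A i j \<and> s ! j}) \<noteq> e ! i) [0..<m]"

definition hamming_weight :: "bool list \<Rightarrow> nat" where
  "hamming_weight e = length (filter id e)"

definition lpn_range :: "(nat \<Rightarrow> nat \<Rightarrow> bool) \<Rightarrow> nat \<Rightarrow> nat \<Rightarrow> real \<Rightarrow> bool list set" where
  "lpn_range A m n mu = {lin_F2 A m n s e | s e. length s = n \<and> length e = m \<and>
                            real (hamming_weight e) \<le> mu * real m}"

end

theory Submission
  imports Defs
begin

lemma wire_vals_append: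
  "wire_vals (gs @ hs) x = foldl (\<lambda>vs g. vs @ [gate_val x vs g]) (wire_vals gs x) hs"
  by (simp add: wire_vals_def)

lemma wire_vals_Nil[simp]: "wire_vals [] x = []" by (simp add: wire_vals_def)

lemma wire_vals_snoc: "wire_vals (gs @ [g]) x = wire_vals gs x @ [gate_val x (wire_vals gs x) g]"
  by (simp add: wire_vals_def)

lemma foldl_gate_length:
  "length (foldl (\<lambda>vs g. vs @ [gate_val x vs g]) vs hs) = length vs + length hs"
  by (induction hs arbitrary: vs) auto

lemma foldl_gate_prefix:
  "\<exists>r. foldl (\<lambda>vs g. vs @ [gate_val x vs g]) vs hs = vs @ r"
proof (induction hs arbitrary: vs)
  case Nil then show ?case by simp
next
  case (Cons h hs)
  obtain r where "foldl (\<lambda>vs g. vs @ [gate_val x vs g]) (vs @ [gate_val x vs h]) hs = (vs @ [gate_val x vs h]) @ r"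
    using Cons.IH by blast
  then show ?case by (intro exI[of _ "gate_val x vs h # r"]) simp
qed

lemma length_wire_vals[simp]: "length (wire_vals gs x) = length gs"
  using foldl_gate_length[of x "[]" gs] by (simp add: wire_vals_def)

lemma wire_snoc: "wire (vs @ [b]) j = (if j < length vs then wire vs j else if j = length vs then b else False)"
  by (simp add: wire_def nth_append)

lemma wire_ext:
  assumes "j < length gs" shows "wire (wire_vals (gs @ hs) x) j = wire (wire_vals gs x) j"
proof -
  obtain r where "wire_vals (gs @ hs) x = wire_vals gs x @ r"
    using foldl_gate_prefix[of x "wire_vals gs x" hs] by (auto simp: wire_vals_append)
  then show ?thesis using assms by (simp add: wire_def nth_append)
qed

fun and_chain :: "gate list \<Rightarrow> nat list \<Rightarrow> gate list \<times> nat" where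
  "and_chain gs [] = (gs @ [Const True], length gs)"
| "and_chain gs (v # vs) = (case and_chain gs vs of (gs1, a) \<Rightarrow>
      (gs1 @ [Input v, And a (length gs1)], Suc (length gs1)))"

lemma wire_last: "wire (wire_vals (gs @ [g]) x) (length gs) = gate_val x (wire_vals gs x) g"
  by (simp add: wire_vals_snoc wire_def nth_append)

lemma wire_ext1: "j < length gs \<Longrightarrow> wire (wire_vals (gs @ [g]) x) j = wire (wire_vals gs x) j"
  using wire_ext[of j gs "[g]" x] by simp

lemma and_chain_spec:
  "and_chain gs vs = (gs', w) \<Longrightarrow> (\<exists>hs. gs' = gs @ hs) \<and> w < length gs' \<and>
     wire (wire_vals gs' x) w = (\<forall>v\<in>set vs. wire x v) \<and> length gs' = length gs + 2 * length vs + 1"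
proof (induction vs arbitrary: gs' w)
  case Nil
  then show ?case using wire_last[of gs "Const True" x] by auto
next
  case (Cons v vs)
  obtain gs1 a where e: "and_chain gs vs = (gs1, a)" by (cases "and_chain gs vs")
  note IH = Cons.IH[OF e]
  define G1 where "G1 = gs1 @ [Input v]"
  have gs': "gs' = G1 @ [And a (length gs1)]" and w: "w = length G1"
    using Cons.prems e by (auto simp: G1_def)
  have a: "a < length gs1" using IH by simp
  have "wire (wire_vals gs' x) w = (wire (wire_vals G1 x) a \<and> wire (wire_vals G1 x) (length gs1))"
    unfolding gs' w by (simp add: wire_last)
  also have "wire (wire_vals G1 x) a = wire (wire_vals gs1 x) a"
    unfolding G1_def using a by (rule wire_ext1)
  also have "wire (wire_vals G1 x) (length gs1) = wire x v"
    unfolding G1_def by (simp add: wire_last)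
  finally have val: "wire (wire_vals gs' x) w = (\<forall>v\<in>set (v # vs). wire x v)" using IH by auto
  show ?case using IH val unfolding gs' w G1_def by auto
qed

lemma xor_val:
  assumes "a < length gs" "b < length gs"
  shows "wire (wire_vals (gs @ [Neg a, Neg b, And a (length gs + 1), And (length gs) b,
             Or (length gs + 2) (length gs + 3)]) x) (length gs + 4) =
         (wire (wire_vals gs x) a \<noteq> wire (wire_vals gs x) b)"
proof -
  let ?L = "length gs"
  define G1 where "G1 = gs @ [Neg a]"
  define G2 where "G2 = G1 @ [Neg b]"
  define G3 where "G3 = G2 @ [And a (?L + 1)]"
  define G4 where "G4 = G3 @ [And ?L b]"
  define G5 where "G5 = G4 @ [Or (?L + 2) (?L + 3)]"
  have l: "length G1 = ?L + 1" "length G2 = ?L + 2" "length G3 = ?L + 3" "length G4 = ?L + 4"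
    by (simp_all add: G1_def G2_def G3_def G4_def)
  have e: "gs @ [Neg a, Neg b, And a (?L + 1), And ?L b, Or (?L + 2) (?L + 3)] = G5"
    by (simp add: G1_def G2_def G3_def G4_def G5_def)
  let ?A = "wire (wire_vals gs x) a" and ?B = "wire (wire_vals gs x) b"
  have w1: "wire (wire_vals G1 x) j = wire (wire_vals gs x) j" if "j < ?L" for j
    unfolding G1_def using that by (rule wire_ext1)
  have w2: "wire (wire_vals G2 x) j = wire (wire_vals G1 x) j" if "j < ?L + 1" for j
    unfolding G2_def using that l by (intro wire_ext1) simp
  have w3: "wire (wire_vals G3 x) j = wire (wire_vals G2 x) j" if "j < ?L + 2" for j
    unfolding G3_def using that l by (intro wire_ext1) simp
  have w4: "wire (wire_vals G4 x) j = wire (wire_vals G3 x) j" if "j < ?L + 3" for j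
    unfolding G4_def using that l by (intro wire_ext1) simp
  have v1: "wire (wire_vals G1 x) ?L = (\<not> ?A)"
    unfolding G1_def by (simp add: wire_last)
  have v2: "wire (wire_vals G2 x) (?L + 1) = (\<not> ?B)"
    using wire_last[of G1 "Neg b" x] l w1[OF assms(2)] unfolding G2_def by simp
  have v3: "wire (wire_vals G3 x) (?L + 2) = (?A \<and> \<not> ?B)"
    using wire_last[of G2 "And a (?L + 1)" x] l v2 w2[of a] w1[OF assms(1)] assms
    unfolding G3_def by simp
  have v4: "wire (wire_vals G4 x) (?L + 3) = (\<not> ?A \<and> ?B)"
    using wire_last[of G3 "And ?L b" x] l v1 w3[of ?L] w2[of ?L] w3[of b] w2[of b] w1[OF assms(2)] assms
    unfolding G4_def by simp
  have v5: "wire (wire_vals G5 x) (?L + 4) = ((?A \<and> \<not> ?B) \<or> (\<not> ?A \<and> ?B))"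
    using wire_last[of G4 "Or (?L + 2) (?L + 3)" x] l v3 v4 w4[of "?L + 2"]
    unfolding G5_def by simp
  show ?thesis unfolding e using v5 by auto
qed

definition pval :: "nat list list \<Rightarrow> bool list \<Rightarrow> bool" where
  "pval ms x = odd (length (filter (\<lambda>m. \<forall>v\<in>set m. wire x v) ms))"

fun poly_c :: "gate list \<Rightarrow> nat list list \<Rightarrow> gate list \<times> nat" where
  "poly_c gs [] = (gs @ [Const False], length gs)"
| "poly_c gs (m # ms) = (case poly_c gs ms of (gs1, a) \<Rightarrow> case and_chain gs1 m of (gs2, b) \<Rightarrow>
     (gs2 @ [Neg a, Neg b, And a (length gs2 + 1), And (length gs2) b,
             Or (length gs2 + 2) (length gs2 + 3)], length gs2 + 4))"

lemma poly_c_spec: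
  "poly_c gs ms = (gs', w) \<Longrightarrow> (\<forall>m\<in>set ms. length m \<le> D) \<Longrightarrow>
     (\<exists>hs. gs' = gs @ hs) \<and> w < length gs' \<and>
     wire (wire_vals gs' x) w = pval ms x \<and> length gs' \<le> length gs + 1 + length ms * (2 * D + 6)"
proof (induction ms arbitrary: gs' w)
  case Nil
  then show ?case by (auto simp: wire_vals_snoc wire_snoc pval_def)
next
  case (Cons m ms)
  obtain gs1 a where e: "poly_c gs ms = (gs1, a)" by (cases "poly_c gs ms")
  obtain gs2 b where e2: "and_chain gs1 m = (gs2, b)" by (cases "and_chain gs1 m")
  have pr: "\<forall>m\<in>set ms. length m \<le> D" using Cons.prems(2) by simp
  note IH = Cons.IH[OF e pr]
  note AC = and_chain_spec[OF e2, of x]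
  have gs': "gs' = gs2 @ [Neg a, Neg b, And a (length gs2 + 1), And (length gs2) b,
             Or (length gs2 + 2) (length gs2 + 3)]" and w: "w = length gs2 + 4"
    using Cons.prems e e2 by auto
  from AC obtain hs where hs: "gs2 = gs1 @ hs" by blast
  have a: "a < length gs2" "b < length gs2" using IH AC Cons.prems by auto
  have va: "wire (wire_vals gs2 x) a = pval ms x"
    using IH Cons.prems hs wire_ext[of a gs1 hs x] by auto
  have vb: "wire (wire_vals gs2 x) b = (\<forall>v\<in>set m. wire x v)" using AC by auto
  have val: "wire (wire_vals gs' x) w = (wire (wire_vals gs2 x) a \<noteq> wire (wire_vals gs2 x) b)"
    unfolding gs' w using a by (rule xor_val)
  have pv: "pval (m # ms) x = (pval ms x \<noteq> (\<forall>v\<in>set m. wire x v))"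
    by (auto simp: pval_def)
  show ?case
  proof (intro conjI)
    show "\<exists>hs. gs' = gs @ hs" using IH hs gs' by auto
    show "w < length gs'" using gs' w by simp
    show "wire (wire_vals gs' x) w = pval (m # ms) x" using val va vb pv by simp
    show "length gs' \<le> length gs + 1 + length (m # ms) * (2 * D + 6)"
      using IH AC Cons.prems gs' by auto
  qed
qed

fun polys_c :: "gate list \<Rightarrow> nat list list list \<Rightarrow> gate list \<times> nat list" where
  "polys_c gs [] = (gs, [])"
| "polys_c gs (p # ps) = (case poly_c gs p of (gs1, w) \<Rightarrow> case polys_c gs1 ps of (gs2, ws) \<Rightarrow>
     (gs2, w # ws))"

lemma polys_c_spec:
  "polys_c gs ps = (gs', ws) \<Longrightarrow> (\<forall>p\<in>set ps. \<forall>m\<in>set p. length m \<le> D) \<Longrightarrow>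
   (\<forall>p\<in>set ps. length p \<le> L) \<Longrightarrow>
     (\<exists>hs. gs' = gs @ hs) \<and> (\<forall>w\<in>set ws. w < length gs') \<and>
     map (wire (wire_vals gs' x)) ws = map (\<lambda>p. pval p x) ps \<and>
     length gs' \<le> length gs + length ps * (1 + L * (2 * D + 6))"
proof (induction ps arbitrary: gs gs' ws)
  case Nil
  then show ?case by auto
next
  case (Cons p ps)
  obtain gs1 w where e: "poly_c gs p = (gs1, w)" by (cases "poly_c gs p")
  obtain gs2 ws' where e2: "polys_c gs1 ps = (gs2, ws')" by (cases "polys_c gs1 ps")
  have PC: "(\<exists>hs. gs1 = gs @ hs) \<and> w < length gs1 \<and>
     wire (wire_vals gs1 x) w = pval p x \<and> length gs1 \<le> length gs + 1 + length p * (2 * D + 6)"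
    using poly_c_spec[OF e, of D x] Cons.prems by auto
  note IH = Cons.IH[OF e2] 
  have IH': "(\<exists>hs. gs2 = gs1 @ hs) \<and> (\<forall>w\<in>set ws'. w < length gs2) \<and>
     map (wire (wire_vals gs2 x)) ws' = map (\<lambda>p. pval p x) ps \<and>
     length gs2 \<le> length gs1 + length ps * (1 + L * (2 * D + 6))"
    using IH Cons.prems by auto
  have r: "gs' = gs2" "ws = w # ws'" using Cons.prems e e2 by auto
  from IH' obtain hs where hs: "gs2 = gs1 @ hs" by blast
  have lp: "length p * (2 * D + 6) \<le> L * (2 * D + 6)" using Cons.prems by auto
  show ?case
  proof (intro conjI)
    show "\<exists>hs. gs' = gs @ hs" using PC IH' r by auto
    show "\<forall>w\<in>set ws. w < length gs'" using PC IH' r hs by auto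
    show "map (wire (wire_vals gs' x)) ws = map (\<lambda>p. pval p x) (p # ps)"
      using PC IH' r hs wire_ext[of w gs1 hs x] by auto
    have l1: "length gs1 \<le> length gs + 1 + length p * (2 * D + 6)" using PC by simp
    have l2: "length gs2 \<le> length gs1 + length ps * (1 + L * (2 * D + 6))" using IH' by simp
    have "length gs' \<le> length gs + 1 + L * (2 * D + 6) + length ps * (1 + L * (2 * D + 6))"
      using l1 l2 lp unfolding r(1) by linarith
    then show "length gs' \<le> length gs + length (p # ps) * (1 + L * (2 * D + 6))"
      by (simp add: algebra_simps)
  qed
qed


definition dig :: "nat \<Rightarrow> nat \<Rightarrow> nat \<Rightarrow> nat" where
  "dig a c i = (i div a ^ c) mod a"

lemma dig_eq:
  assumes "a > 0" "u < a ^ d" "w < a ^ d" "\<forall>c<d. dig a c u = dig a c w"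
  shows "u = w"
  using assms
proof (induction d arbitrary: u w)
  case 0
  then show ?case by simp
next
  case (Suc d)
  have m: "u mod a = w mod a" using Suc.prems(4) by (auto simp: dig_def dest: spec[of _ 0])
  have lt: "u div a < a ^ d" "w div a < a ^ d" using Suc.prems
    by (auto simp: less_mult_imp_div_less mult.commute)
  have "\<forall>c<d. dig a c (u div a) = dig a c (w div a)"
  proof (intro allI impI)
    fix c assume "c < d"
    then have "dig a (Suc c) u = dig a (Suc c) w" using Suc.prems(4) by auto
    then show "dig a c (u div a) = dig a c (w div a)"
      by (simp add: dig_def div_mult2_eq)
  qed
  then have "u div a = w div a" using Suc.IH[OF Suc.prems(1) lt] by blast
  then show ?case using m by (metis div_mult_mod_eq)
qed

definition vr :: "nat \<Rightarrow> nat \<Rightarrow> nat \<Rightarrow> nat \<Rightarrow> nat \<Rightarrow> nat \<Rightarrow> nat" where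
  "vr k d a j c r = k + j * (d * a) + c * a + r"

definition errmon :: "nat \<Rightarrow> nat \<Rightarrow> nat \<Rightarrow> nat \<Rightarrow> nat \<Rightarrow> nat list" where
  "errmon k d a j i = map (\<lambda>c. vr k d a j c (dig a c i)) [0..<d]"

definition mons_k :: "(nat \<Rightarrow> nat \<Rightarrow> bool) \<Rightarrow> nat \<Rightarrow> nat \<Rightarrow> nat \<Rightarrow> nat \<Rightarrow> nat list list" where
  "mons_k B k d a i = map (\<lambda>l. [l]) (filter (B i) [0..<k]) @ map (\<lambda>j. errmon k d a j i) [0..<k]"

lemma vr_decode:
  assumes "a > 0" "c < d" "r < a"
  shows "(vr k d a j c r - k) div (d * a) = j" "(vr k d a j c r - k) mod (d * a) div a = c"
        "(vr k d a j c r - k) mod a = r" "k \<le> vr k d a j c r"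
proof -
  have cr: "c * a + r < d * a"
  proof -
    have "c * a + r < (c + 1) * a" using assms by simp
    also have "\<dots> \<le> d * a" using assms by (intro mult_right_mono) auto
    finally show ?thesis .
  qed
  have da: "d * a \<noteq> 0" using cr assms by auto
  have e: "vr k d a j c r - k = (c * a + r) + j * (d * a)" by (simp add: vr_def)
  show "(vr k d a j c r - k) div (d * a) = j"
  proof -
    have "(c * a + r + j * (d * a)) div (d * a) = j + (c * a + r) div (d * a)"
      by (rule div_mult_self1[OF da])
    then show ?thesis unfolding e using cr by simp
  qed
  have "(vr k d a j c r - k) mod (d * a) = c * a + r"
  proof -
    have "(c * a + r + j * (d * a)) mod (d * a) = (c * a + r) mod (d * a)"
      by (rule mod_mult_self1)
    then show ?thesis unfolding e using cr by simp
  qed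
  moreover have "(c * a + r) div a = c"
  proof -
    have "(r + c * a) div a = c + r div a" using assms by (intro div_mult_self1) simp
    then show ?thesis using assms by (simp add: add.commute)
  qed
  ultimately show "(vr k d a j c r - k) mod (d * a) div a = c" by simp
  have e2: "vr k d a j c r - k = r + (c + j * d) * a" by (simp add: vr_def algebra_simps)
  show "(vr k d a j c r - k) mod a = r"
  proof -
    have "(r + (c + j * d) * a) mod a = r mod a" by (rule mod_mult_self1)
    then show ?thesis unfolding e2 using assms by simp
  qed
  show "k \<le> vr k d a j c r" by (simp add: vr_def)
qed

lemma vr_bound:
  assumes "j < k" "c < d" "r < a"
  shows "vr k d a j c r < k * (1 + d * a)"
proof -
  have "c * a + r < d * a"
  proof -
    have "c * a + r < (c + 1) * a" using assms by simp
    also have "\<dots> \<le> d * a" using assms by (intro mult_right_mono) auto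
    finally show ?thesis .
  qed
  then have "vr k d a j c r < k + (j + 1) * (d * a)" by (simp add: vr_def)
  also have "\<dots> \<le> k + k * (d * a)" using assms by (intro add_left_mono mult_right_mono) auto
  finally show ?thesis by (simp add: algebra_simps)
qed

lemma dig_lt: "a > 0 \<Longrightarrow> dig a c i < a" by (simp add: dig_def)


lemma card_filter_upt: "length (filter P [0..<k]) = card {l. l < k \<and> P l}"
proof -
  have "{i. i < k \<and> P ([0..<k] ! i)} = {l. l < k \<and> P l}" by auto
  then show ?thesis by (simp add: length_filter_conv_card)
qed

lemma cover:
  assumes a: "a > 0" and d: "d > 0" and N: "N \<le> a ^ d" and s: "length s = k"
    and e: "length e = M" and NM: "N \<le> M" and hw: "hamming_weight e \<le> k"
  shows "\<exists>x. length x = k * (1 + d * a) \<and>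
     map (\<lambda>i. pval (mons_k B k d a i) x) [0..<N] = take N (lin_F2 B M k s e)"
proof -
  define ps where "ps = filter (\<lambda>p. e ! p) [0..<N]"
  define jo where "jo v = (v - k) div (d * a)" for v
  define xval where "xval v = (if v < k then s ! v else
     (jo v < length ps \<and> dig a ((v - k) mod (d * a) div a) (ps ! jo v) = (v - k) mod a))" for v
  define x where "x = map xval [0..<k * (1 + d * a)]"
  have lx: "length x = k * (1 + d * a)" by (simp add: x_def)
  have psd: "distinct ps" by (simp add: ps_def)
  have ps_lt: "ps ! j < N" if "j < length ps" for j
  proof -
    have "ps ! j \<in> set ps" using that by (rule nth_mem)
    then show ?thesis by (simp add: ps_def)
  qed
  have set_ps: "\<And>i. i < N \<Longrightarrow> i \<in> set ps \<longleftrightarrow> e ! i" by (auto simp: ps_def)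
  have lps: "length ps \<le> k"
  proof -
    have "length ps = card {l. l < N \<and> e ! l}" unfolding ps_def by (rule card_filter_upt)
    also have "\<dots> \<le> card {l. l < M \<and> e ! l}" using NM by (intro card_mono) auto
    also have "\<dots> = hamming_weight e"
      unfolding hamming_weight_def length_filter_conv_card using e by simp
    finally show ?thesis using hw by simp
  qed
  have wx: "\<And>v. v < k * (1 + d * a) \<Longrightarrow> wire x v = xval v"
    by (simp add: wire_def x_def lx)
  have sat_err: "(\<forall>v\<in>set (errmon k d a j i). wire x v) \<longleftrightarrow> (j < length ps \<and> ps ! j = i)"
    if j: "j < k" and i: "i < N" for j i
  proof -
    have "(\<forall>v\<in>set (errmon k d a j i). wire x v) \<longleftrightarrow>
          (\<forall>c<d. j < length ps \<and> dig a c (ps ! j) = dig a c i)"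
    proof -
      have "wire x (vr k d a j c (dig a c i)) = (j < length ps \<and> dig a c (ps ! j) = dig a c i)"
        if c: "c < d" for c
      proof -
        have r: "dig a c i < a" using a by (rule dig_lt)
        note D = vr_decode[OF a c r, of k j]
        have "vr k d a j c (dig a c i) < k * (1 + d * a)" using vr_bound[OF j c r] .
        then have "wire x (vr k d a j c (dig a c i)) = xval (vr k d a j c (dig a c i))"
          by (rule wx)
        also have "\<dots> = (j < length ps \<and> dig a c (ps ! j) = dig a c i)"
        proof -
          have nk: "\<not> vr k d a j c (dig a c i) < k" using D(4) by simp
          show ?thesis unfolding xval_def jo_def using nk D(1,2,3) by simp
        qed
        finally show ?thesis .
      qed
      then show ?thesis by (auto simp: errmon_def)
    qed
    also have "\<dots> \<longleftrightarrow> (j < length ps \<and> ps ! j = i)"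
    proof
      assume h: "\<forall>c<d. j < length ps \<and> dig a c (ps ! j) = dig a c i"
      then have jl: "j < length ps" using d by auto
      have "ps ! j = i"
        using dig_eq[OF a, of "ps ! j" d i] ps_lt[OF jl] N i h by auto
      then show "j < length ps \<and> ps ! j = i" using jl by simp
    qed auto
    finally show ?thesis .
  qed
  have per_i: "pval (mons_k B k d a i) x = (odd (card {j \<in> {0..<k}. B i j \<and> s ! j}) \<noteq> e ! i)"
    if i: "i < N" for i
  proof -
    let ?sat = "\<lambda>m. \<forall>v\<in>set m. wire x v"
    have A: "length (filter ?sat (map (\<lambda>l. [l]) (filter (B i) [0..<k]))) = card {j \<in> {0..<k}. B i j \<and> s ! j}"
    proof -
      have "filter ?sat (map (\<lambda>l. [l]) (filter (B i) [0..<k])) =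
            map (\<lambda>l. [l]) (filter (\<lambda>l. B i l \<and> s ! l) [0..<k])"
      proof -
        have "\<And>l. l < k \<Longrightarrow> wire x l = s ! l"
        proof -
          fix l assume l: "l < k"
          have "k \<le> k * (1 + d * a)" by simp
          then have "wire x l = xval l" using l by (intro wx) linarith
          then show "wire x l = s ! l" using l by (simp add: xval_def)
        qed
        then have "filter (\<lambda>xa. B i xa \<and> wire x xa) [0..<k] = filter (\<lambda>l. B i l \<and> s ! l) [0..<k]"
          by (intro filter_cong) auto
        then show ?thesis by (simp add: filter_map comp_def filter_filter)
      qed
      then show ?thesis by (simp add: card_filter_upt)
    qed
    have E: "length (filter ?sat (map (\<lambda>j. errmon k d a j i) [0..<k])) = (if e ! i then 1 else 0)"
    proof -
      have "filter ?sat (map (\<lambda>j. errmon k d a j i) [0..<k]) =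
            map (\<lambda>j. errmon k d a j i) (filter (\<lambda>j. j < length ps \<and> ps ! j = i) [0..<k])"
      proof -
        have "filter (\<lambda>j. \<forall>v\<in>set (errmon k d a j i). wire x v) [0..<k] =
              filter (\<lambda>j. j < length ps \<and> ps ! j = i) [0..<k]"
          using sat_err[OF _ i] by (intro filter_cong) auto
        then show ?thesis by (simp add: filter_map comp_def)
      qed
      then have "length (filter ?sat (map (\<lambda>j. errmon k d a j i) [0..<k])) =
                 card {j. j < k \<and> j < length ps \<and> ps ! j = i}"
        by (simp add: card_filter_upt)
      also have "{j. j < k \<and> j < length ps \<and> ps ! j = i} = {j. j < length ps \<and> ps ! j = i}"
        using lps by auto
      also have "card \<dots> = (if e ! i then 1 else 0)"
      proof (cases "e ! i")
        case True
        then have "i \<in> set ps" using set_ps[OF i] by simp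
        from distinct_Ex1[OF psd this] obtain j0 where j0: "j0 < length ps \<and> ps ! j0 = i"
          and u: "\<forall>j. j < length ps \<and> ps ! j = i \<longrightarrow> j = j0" by blast
        have "{j. j < length ps \<and> ps ! j = i} = {j0}"
        proof (intro set_eqI iffI)
          fix j assume "j \<in> {j. j < length ps \<and> ps ! j = i}"
          then show "j \<in> {j0}" using u by blast
        next
          fix j assume "j \<in> {j0}"
          then show "j \<in> {j. j < length ps \<and> ps ! j = i}" using j0 by blast
        qed
        then show ?thesis using True by (simp only: card.empty card_insert_disjoint) simp
      next
        case False
        then have "i \<notin> set ps" using set_ps[OF i] by simp
        then have "{j. j < length ps \<and> ps ! j = i} = {}" by (auto simp: in_set_conv_nth)
        then show ?thesis using False by simp
      qed
      finally show ?thesis .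
    qed
    have "pval (mons_k B k d a i) x = odd (length (filter ?sat (map (\<lambda>l. [l]) (filter (B i) [0..<k]))) +
        length (filter ?sat (map (\<lambda>j. errmon k d a j i) [0..<k])))"
      by (simp add: pval_def mons_k_def)
    then show ?thesis unfolding A E by (cases "e ! i") auto
  qed
  show ?thesis
  proof (intro exI conjI)
    show "length x = k * (1 + d * a)" by (rule lx)
    show "map (\<lambda>i. pval (mons_k B k d a i) x) [0..<N] = take N (lin_F2 B M k s e)"
    proof (rule nth_equalityI)
      show "length (map (\<lambda>i. pval (mons_k B k d a i) x) [0..<N]) = length (take N (lin_F2 B M k s e))"
        using NM by (simp add: lin_F2_def)
      fix i assume "i < length (map (\<lambda>i. pval (mons_k B k d a i) x) [0..<N])"
      then have i: "i < N" by simp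
      then show "map (\<lambda>i. pval (mons_k B k d a i) x) [0..<N] ! i = take N (lin_F2 B M k s e) ! i"
        using NM per_i[OF i] by (simp add: lin_F2_def)
    qed
  qed
qed


lemma errmon_set: "a > 0 \<Longrightarrow> v \<in> set (errmon k d a j i) \<Longrightarrow> k \<le> v \<and> (v - k) div (d * a) = j"
  unfolding errmon_def using vr_decode dig_lt by auto

lemma mons_k_props:
  assumes a: "a > 0" and d: "d > 0"
  shows "\<forall>m\<in>set (mons_k B k d a i). length m \<le> d \<and> (\<forall>v\<in>set m. v < k * (1 + d * a))"
    and "length (mons_k B k d a i) \<le> 2 * k"
    and "distinct (map set (mons_k B k d a i))"
proof -
  have vb: "vr k d a j c (dig a c i) < k * (1 + d * a)" if "j < k" "c < d" for j c
    using vr_bound[OF that dig_lt[OF a]] .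
  have lb: "l < k * (1 + d * a)" if "l < k" for l
  proof -
    have "k \<le> k * (1 + d * a)" by simp
    then show ?thesis using that by linarith
  qed
  have e1: "\<forall>m\<in>set (map (\<lambda>l. [l]) (filter (B i) [0..<k])). length m \<le> d \<and> (\<forall>v\<in>set m. v < k * (1 + d * a))"
  proof
    fix m assume "m \<in> set (map (\<lambda>l. [l]) (filter (B i) [0..<k]))"
    then obtain l where "l < k" "m = [l]" by auto
    then show "length m \<le> d \<and> (\<forall>v\<in>set m. v < k * (1 + d * a))" using d lb by simp
  qed
  have e2: "\<forall>m\<in>set (map (\<lambda>j. errmon k d a j i) [0..<k]). length m \<le> d \<and> (\<forall>v\<in>set m. v < k * (1 + d * a))"
  proof
    fix m assume "m \<in> set (map (\<lambda>j. errmon k d a j i) [0..<k])"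
    then obtain j where j: "j < k" "m = errmon k d a j i" by auto
    have "length m = d" using j by (simp add: errmon_def)
    moreover have "\<forall>v\<in>set m. v < k * (1 + d * a)"
    proof
      fix v assume "v \<in> set m"
      then obtain c where "c < d" "v = vr k d a j c (dig a c i)" using j by (auto simp: errmon_def)
      then show "v < k * (1 + d * a)" using vb j by simp
    qed
    ultimately show "length m \<le> d \<and> (\<forall>v\<in>set m. v < k * (1 + d * a))" by simp
  qed
  show "\<forall>m\<in>set (mons_k B k d a i). length m \<le> d \<and> (\<forall>v\<in>set m. v < k * (1 + d * a))"
    using e1 e2 unfolding mons_k_def set_append by blast
  have "length (filter (B i) [0..<k]) \<le> k" using length_filter_le[of "B i" "[0..<k]"] by simp
  then show "length (mons_k B k d a i) \<le> 2 * k" unfolding mons_k_def by simp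
  have d1: "distinct (map set (map (\<lambda>l. [l]) (filter (B i) [0..<k])))"
    by (simp add: distinct_map inj_on_def)
  have mem: "vr k d a j 0 (dig a 0 i) \<in> set (errmon k d a j i)" for j
    using d by (simp add: errmon_def)
  have d2: "distinct (map set (map (\<lambda>j. errmon k d a j i) [0..<k]))"
  proof -
    have "inj_on (\<lambda>j. set (errmon k d a j i)) {0..<k}"
    proof (rule inj_onI)
      fix j j' assume "set (errmon k d a j i) = set (errmon k d a j' i)"
      then have "vr k d a j 0 (dig a 0 i) \<in> set (errmon k d a j' i)" using mem[of j] by simp
      then have "(vr k d a j 0 (dig a 0 i) - k) div (d * a) = j'" using errmon_set[OF a] by blast
      moreover have "(vr k d a j 0 (dig a 0 i) - k) div (d * a) = j" using errmon_set[OF a mem[of j]] by blast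
      ultimately show "j = j'" by simp
    qed
    then show ?thesis by (simp add: distinct_map comp_def)
  qed
  have d3: "set (map set (map (\<lambda>l. [l]) (filter (B i) [0..<k]))) \<inter>
            set (map set (map (\<lambda>j. errmon k d a j i) [0..<k])) = {}"
  proof (rule ccontr)
    assume "set (map set (map (\<lambda>l. [l]) (filter (B i) [0..<k]))) \<inter>
            set (map set (map (\<lambda>j. errmon k d a j i) [0..<k])) \<noteq> {}"
    then obtain l j where l: "l < k" and eq: "{l} = set (errmon k d a j i)" by auto
    then have "l \<in> set (errmon k d a j i)" by blast
    then have "k \<le> l" using errmon_set[OF a] by blast
    then show False using l by simp
  qed
  show "distinct (map set (mons_k B k d a i))"
    unfolding mons_k_def map_append distinct_append using d1 d2 d3 by blast
qed

lemma pval_f2: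
  assumes "distinct (map set ms)" and "\<forall>m\<in>set ms. \<forall>v\<in>set m. v < length x"
  shows "f2_poly_eval (set (map set ms)) x = pval ms x"
proof -
  let ?sat = "\<lambda>m. \<forall>v\<in>set m. wire x v"
  have "{M \<in> set (map set ms). \<forall>j\<in>M. x ! j} = set (map set (filter ?sat ms))"
  proof (intro set_eqI iffI)
    fix M assume "M \<in> {M \<in> set (map set ms). \<forall>j\<in>M. x ! j}"
    then obtain m where m: "m \<in> set ms" "M = set m" "\<forall>j\<in>set m. x ! j" by auto
    then have "?sat m" using assms(2) by (simp add: wire_def)
    then show "M \<in> set (map set (filter ?sat ms))" using m by auto
  next
    fix M assume "M \<in> set (map set (filter ?sat ms))"
    then obtain m where m: "m \<in> set ms" "M = set m" "?sat m" by auto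
    then have "\<forall>j\<in>set m. x ! j" using assms(2) by (simp add: wire_def)
    then show "M \<in> {M \<in> set (map set ms). \<forall>j\<in>M. x ! j}" using m by auto
  qed
  moreover have "distinct (map set (filter ?sat ms))"
    using assms(1) by (rule distinct_map_filter)
  then have "card (set (map set (filter ?sat ms))) = length (map set (filter ?sat ms))"
    by (rule distinct_card)
  ultimately have "card {M \<in> set (map set ms). \<forall>j\<in>M. x ! j} = length (filter ?sat ms)"
    by simp
  then show ?thesis unfolding f2_poly_eval_def pval_def by simp
qed


definition aa :: "nat \<Rightarrow> nat \<Rightarrow> nat" where
  "aa q k = nat \<lfloor>real k powr (1 / real q)\<rfloor> + 1"

lemma aa_gt: "real (aa q k) > real k powr (1 / real q)"
proof -
  have "real (nat \<lfloor>real k powr (1 / real q)\<rfloor>) = of_int \<lfloor>real k powr (1 / real q)\<rfloor>" by simp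
  then show ?thesis unfolding aa_def by linarith
qed

lemma aa_le: "real (aa q k) \<le> real k powr (1 / real q) + 1"
proof -
  have "real (nat \<lfloor>real k powr (1 / real q)\<rfloor>) = of_int \<lfloor>real k powr (1 / real q)\<rfloor>" by simp
  then show ?thesis unfolding aa_def by linarith
qed

lemma aa_mono: "k \<le> k' \<Longrightarrow> aa q k \<le> aa q k'"
  unfolding aa_def by (intro add_right_mono nat_mono floor_mono powr_mono2) auto

lemma aa_pos: "aa q k > 0" by (simp add: aa_def)

lemma aa_pow: assumes "q > 0" shows "real k \<le> real (aa q k) ^ q"
proof (cases "k = 0")
  case True then show ?thesis by simp
next
  case False
  have "real k = (real k powr (1 / real q)) ^ q"
    using False assms by (simp add: powr_realpow[symmetric] powr_powr)
  also have "\<dots> \<le> real (aa q k) ^ q"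
    using aa_gt[of k q] by (intro power_mono) auto
  finally show ?thesis .
qed

lemma m_le_aa:
  assumes q: "q > 0" and eps: "eps > 0" and d: "real d \<ge> real q * (1 + eps)"
  shows "real k powr (1 + eps) \<le> real (aa q k) ^ d"
proof -
  have a1: "real (aa q k) \<ge> 1" using aa_pos[of q k] by simp
  have "real k powr (1 + eps) \<le> (real (aa q k) ^ q) powr (1 + eps)"
    using aa_pow[OF q, of k] eps by (intro powr_mono2) auto
  also have "\<dots> = real (aa q k) powr (real q * (1 + eps))"
    using a1 by (simp add: powr_realpow[symmetric] powr_powr)
  also have "\<dots> \<le> real (aa q k) powr (real d)"
    using a1 d by (intro powr_mono) auto
  also have "\<dots> = real (aa q k) ^ d" using a1 by (simp add: powr_realpow)
  finally show ?thesis .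
qed

lemma aa_le2: assumes "k \<ge> 1" shows "real (aa q k) \<le> 2 * real k powr (1 / real q)"
proof -
  have "real k powr (1 / real q) \<ge> 1" using assms by (simp add: ge_one_powr_ge_zero)
  then show ?thesis using aa_le[of q k] by linarith
qed

lemma nk_bound:
  fixes e0 eps' :: real
  assumes k: "k \<ge> 1" and q: "q > 0" and d: "d \<ge> 1" and e0: "0 < e0" "e0 \<le> 1"
    and qe: "1 / real q \<le> e0 / 4" and ep: "eps' = e0 / 4"
  shows "real (k * (1 + d * aa q k)) powr (1 + eps') \<le> (3 * real d) ^ 2 * real k powr (1 + 3 * e0 / 4)"
proof -
  have kp: "real k powr (1 / real q) \<ge> 1" using k by (simp add: ge_one_powr_ge_zero)
  have "real (k * (1 + d * aa q k)) = real k * (1 + real d * real (aa q k))" by (simp add: algebra_simps)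
  also have "\<dots> \<le> real k * (1 + real d * (2 * real k powr (1 / real q)))"
    using aa_le2[OF k, of q] d by (intro mult_left_mono add_left_mono) auto
  also have "\<dots> \<le> real k * (3 * real d * real k powr (1 / real q))"
  proof -
    have "1 \<le> real d * real k powr (1 / real q)" using d kp
      by (metis mult_mono' of_nat_1 of_nat_le_iff mult_1_left zero_le_one)
    then show ?thesis by (intro mult_left_mono) auto
  qed
  also have "\<dots> = 3 * real d * real k powr (1 + 1 / real q)"
    using k by (simp add: powr_add)
  finally have nb: "real (k * (1 + d * aa q k)) \<le> 3 * real d * real k powr (1 + 1 / real q)" .
  have "real (k * (1 + d * aa q k)) powr (1 + eps') \<le> (3 * real d * real k powr (1 + 1 / real q)) powr (1 + eps')"
    using nb ep e0 by (intro powr_mono2) auto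
  also have "\<dots> = (3 * real d) powr (1 + eps') * real k powr ((1 + 1 / real q) * (1 + eps'))"
    using k d by (simp add: powr_mult powr_powr)
  also have "\<dots> \<le> (3 * real d) powr 2 * real k powr (1 + 3 * e0 / 4)"
  proof (intro mult_mono)
    show "(3 * real d) powr (1 + eps') \<le> (3 * real d) powr 2"
      using d ep e0 by (intro powr_mono) auto
    have "(1 + 1 / real q) * (1 + eps') \<le> (1 + e0 / 4) * (1 + e0 / 4)"
      using qe ep e0 by (intro mult_mono) auto
    also have "\<dots> \<le> 1 + 3 * e0 / 4" using e0 by (simp add: algebra_simps power2_eq_square)
    finally show "real k powr ((1 + 1 / real q) * (1 + eps')) \<le> real k powr (1 + 3 * e0 / 4)"
      using k by (intro powr_mono) auto
  qed auto
  also have "(3 * real d) powr 2 = (3 * real d) ^ 2" using d by (simp add: powr_realpow)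
  finally show ?thesis .
qed

lemma eventually_nk:
  fixes e0 eps eps' :: real
  assumes q: "q > 0" and d: "d \<ge> 1" and e0: "0 < e0" "e0 \<le> 1" "e0 \<le> eps"
    and qe: "1 / real q \<le> e0 / 4" and ep: "eps' = e0 / 4"
  shows "\<exists>K0\<ge>1. \<forall>k\<ge>K0. real (k * (1 + d * aa q k)) powr (1 + eps') \<le> real k powr (1 + eps)"
proof -
  define C where "C = (3 * real d) ^ 2"
  have "(1::real) \<le> 3 * real d" using d by simp
  then have C1: "C \<ge> 1" unfolding C_def by (rule one_le_power)
  define K0 where "K0 = nat \<lceil>C powr (4 / e0)\<rceil> + 1"
  have "\<forall>k\<ge>K0. real (k * (1 + d * aa q k)) powr (1 + eps') \<le> real k powr (1 + eps)"
  proof (intro allI impI)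
    fix k assume kK: "K0 \<le> k"
    then have k: "k \<ge> 1" by (simp add: K0_def)
    have kC: "real k \<ge> C powr (4 / e0)" using kK unfolding K0_def by linarith
    have "C = (C powr (4 / e0)) powr (e0 / 4)" using C1 e0 by (simp add: powr_powr)
    also have "\<dots> \<le> real k powr (e0 / 4)" using kC e0 by (intro powr_mono2) auto
    finally have Ck: "C \<le> real k powr (e0 / 4)" .
    have "real (k * (1 + d * aa q k)) powr (1 + eps') \<le> C * real k powr (1 + 3 * e0 / 4)"
      unfolding C_def by (rule nk_bound[OF k q d e0(1,2) qe ep])
    also have "\<dots> \<le> real k powr (e0 / 4) * real k powr (1 + 3 * e0 / 4)"
      using Ck by (intro mult_right_mono) auto
    also have "\<dots> = real k powr (1 + e0)" using k by (simp add: powr_add[symmetric] algebra_simps)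
    also have "\<dots> \<le> real k powr (1 + eps)" using k e0 by (intro powr_mono) auto
    finally show "real (k * (1 + d * aa q k)) powr (1 + eps') \<le> real k powr (1 + eps)" .
  qed
  then show ?thesis by (intro exI[of _ K0]) (auto simp: K0_def)
qed

lemma eventually_Ngt:
  fixes eps' :: real assumes ep: "eps' > 0"
  shows "\<exists>n1. \<forall>n\<ge>n1. n < nat \<lfloor>real n powr (1 + eps')\<rfloor>"
proof -
  define n1 where "n1 = nat \<lceil>2 powr (1 / eps')\<rceil> + 1"
  have "\<forall>n\<ge>n1. n < nat \<lfloor>real n powr (1 + eps')\<rfloor>"
  proof (intro allI impI)
    fix n assume nn: "n1 \<le> n"
    then have n: "n \<ge> 1" by (simp add: n1_def)
    have "real n \<ge> 2 powr (1 / eps')" using nn unfolding n1_def by linarith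
    then have "(2 powr (1 / eps')) powr eps' \<le> real n powr eps'" using ep by (intro powr_mono2) auto
    then have "2 \<le> real n powr eps'" using ep by (simp add: powr_powr)
    then have "real n * 2 \<le> real n powr (1 + eps')" using n by (simp add: powr_add)
    then have "real n + 1 \<le> real n powr (1 + eps')" using n by linarith
    then show "n < nat \<lfloor>real n powr (1 + eps')\<rfloor>" by linarith
  qed
  then show ?thesis by blast
qed

lemma N_le_sq:
  fixes eps' :: real assumes ep: "eps' > 0" "eps' \<le> 1"
  shows "nat \<lfloor>real n powr (1 + eps')\<rfloor> \<le> (n + 1) ^ 2"
proof -
  have "real n powr (1 + eps') \<le> real (n + 1) powr (1 + eps')" using ep by (intro powr_mono2) auto
  also have "\<dots> \<le> real (n + 1) powr 2" using ep by (intro powr_mono) auto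
  also have "\<dots> = real ((n + 1) ^ 2)" by (simp add: powr_realpow)
  finally show ?thesis by linarith
qed


definition shiftf :: "(nat \<Rightarrow> nat) \<Rightarrow> gate \<Rightarrow> gate" where
  "shiftf \<sigma> g = (case g of Input i \<Rightarrow> Input (\<sigma> i) | _ \<Rightarrow> g)"

lemma foldl_shift:
  assumes "\<forall>i. wire x (\<sigma> i) = wire x' i"
  shows "foldl (\<lambda>vs g. vs @ [gate_val x vs g]) vs (map (shiftf \<sigma>) gs) =
         foldl (\<lambda>vs g. vs @ [gate_val x' vs g]) vs gs"
proof (induction gs arbitrary: vs)
  case Nil then show ?case by simp
next
  case (Cons g gs)
  have "gate_val x vs (shiftf \<sigma> g) = gate_val x' vs g"
    using assms by (cases g) (auto simp: shiftf_def)
  then show ?case using Cons by simp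
qed

lemma circ_eval_shift:
  assumes "\<forall>i. wire x (\<sigma> i) = wire x' i"
  shows "circ_eval (map (shiftf \<sigma>) gs) x = circ_eval gs x'"
  using foldl_shift[OF assms, of "[]" gs] by (simp add: circ_eval_def wire_vals_def)

definition sig :: "nat \<Rightarrow> nat \<Rightarrow> nat \<Rightarrow> nat" where
  "sig N M i = (if i < N then i else i + (M - N))"

lemma wire_sig:
  assumes "length y = M" "N \<le> M"
  shows "wire (y @ w) (sig N M i) = wire (take N y @ w) i"
  using assms by (auto simp: wire_def sig_def nth_append)

lemma nd_accepts_shift:
  assumes "length y = M" "N \<le> M"
  shows "nd_accepts (map (shiftf (sig N M)) (fst D), snd D) y = nd_accepts D (take N y)"
  unfolding nd_accepts_def using circ_eval_shift[OF allI[OF wire_sig[OF assms]]] by simp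

lemma card_strings: "card (strings L) = 2 ^ L"
  using card_lists_length_eq[of "UNIV :: bool set" L] by (simp add: strings_def)

lemma finite_strings: "finite (strings L)"
  using finite_lists_length_eq[of "UNIV :: bool set" L] by (simp add: strings_def)

lemma card_prefix:
  assumes "N \<le> M"
  shows "card {y \<in> strings M. P (take N y)} = card {y \<in> strings N. P y} * 2 ^ (M - N)"
proof -
  have eq: "{y \<in> strings M. P (take N y)} =
            (\<lambda>(u, v). u @ v) ` ({y \<in> strings N. P y} \<times> strings (M - N))"
  proof (intro set_eqI iffI)
    fix y assume "y \<in> {y \<in> strings M. P (take N y)}"
    then have "y = take N y @ drop N y" "(take N y, drop N y) \<in> {y \<in> strings N. P y} \<times> strings (M - N)"
      using assms by (auto simp: strings_def)
    then show "y \<in> (\<lambda>(u, v). u @ v) ` ({y \<in> strings N. P y} \<times> strings (M - N))"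
      by (metis (no_types, lifting) case_prod_conv image_eqI)
  next
    fix y assume "y \<in> (\<lambda>(u, v). u @ v) ` ({y \<in> strings N. P y} \<times> strings (M - N))"
    then show "y \<in> {y \<in> strings M. P (take N y)}" using assms by (auto simp: strings_def)
  qed
  have inj: "inj_on (\<lambda>(u, v). u @ v) ({y \<in> strings N. P y} \<times> strings (M - N))"
    by (auto simp: inj_on_def strings_def)
  have "card {y \<in> strings M. P (take N y)} = card ({y \<in> strings N. P y} \<times> strings (M - N))"
    unfolding eq by (rule card_image[OF inj])
  also have "\<dots> = card {y \<in> strings N. P y} * 2 ^ (M - N)"
    by (simp add: card_cartesian_product card_strings)
  finally show ?thesis .
qed

lemma accept_frac_shift:
  assumes "N \<le> M"
  shows "accept_frac (map (shiftf (sig N M)) (fst D), snd D) M = accept_frac D N"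
proof -
  have "{y \<in> strings M. nd_accepts (map (shiftf (sig N M)) (fst D), snd D) y} =
        {y \<in> strings M. nd_accepts D (take N y)}"
    using nd_accepts_shift[OF _ assms] by (auto simp: strings_def)
  then have "card {y \<in> strings M. nd_accepts (map (shiftf (sig N M)) (fst D), snd D) y} =
     card {y \<in> strings N. nd_accepts D y} * 2 ^ (M - N)"
    using card_prefix[OF assms] by simp
  moreover have "(2::real) ^ M = 2 ^ N * 2 ^ (M - N)" using assms by (simp add: power_add[symmetric])
  ultimately show ?thesis by (simp add: accept_frac_def)
qed


definition nk :: "nat \<Rightarrow> nat \<Rightarrow> nat \<Rightarrow> nat" where
  "nk q d k = k * (1 + d * aa q k)"

lemma nk_ge: "k \<le> nk q d k" by (simp add: nk_def)

lemma nk_strict: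
  assumes "1 \<le> k" "k < k'" shows "nk q d k < nk q d k'"
proof -
  have "nk q d k \<le> k * (1 + d * aa q k')"
    unfolding nk_def using aa_mono[of k k' q] assms by (intro mult_left_mono) auto
  also have "\<dots> < k' * (1 + d * aa q k')"
    by (rule mult_strict_right_mono) (use assms in auto)
  finally show ?thesis by (simp add: nk_def)
qed

lemma nk_inj: "1 \<le> k \<Longrightarrow> 1 \<le> k' \<Longrightarrow> nk q d k = nk q d k' \<Longrightarrow> k = k'"
  by (metis linorder_neqE_nat nk_strict less_irrefl)

definition kof :: "nat \<Rightarrow> nat \<Rightarrow> nat \<Rightarrow> nat \<Rightarrow> nat" where
  "kof q d K0 n = (SOME k. K0 \<le> k \<and> n = nk q d k)"

lemma kof_nk: assumes "1 \<le> K0" "K0 \<le> k" shows "kof q d K0 (nk q d k) = k"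
proof -
  have "K0 \<le> kof q d K0 (nk q d k) \<and> nk q d k = nk q d (kof q d K0 (nk q d k))"
    unfolding kof_def by (rule someI[of _ k]) (use assms in auto)
  then show ?thesis using nk_inj assms by (metis order_trans)
qed

definition gm :: "(nat \<Rightarrow> nat \<Rightarrow> nat \<Rightarrow> bool) \<Rightarrow> nat \<Rightarrow> nat \<Rightarrow> nat \<Rightarrow> nat \<Rightarrow> nat \<Rightarrow> nat list list" where
  "gm A q d K0 n i = (if \<exists>k. K0 \<le> k \<and> n = nk q d k then
      mons_k (A (kof q d K0 n)) (kof q d K0 n) d (aa q (kof q d K0 n)) i else [])"

lemma gm_nk: "1 \<le> K0 \<Longrightarrow> K0 \<le> k \<Longrightarrow> gm A q d K0 (nk q d k) i = mons_k (A k) k d (aa q k) i"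
  unfolding gm_def using kof_nk by auto

lemma gm_props:
  assumes K0: "1 \<le> K0" and d: "d > 0"
  shows "(\<forall>m\<in>set (gm A q d K0 n i). length m \<le> d \<and> (\<forall>v\<in>set m. v < n)) \<and>
         length (gm A q d K0 n i) \<le> 2 * n \<and> distinct (map set (gm A q d K0 n i))"
proof (cases "\<exists>k. K0 \<le> k \<and> n = nk q d k")
  case True
  then obtain k where k: "K0 \<le> k" "n = nk q d k" by blast
  have a: "aa q k > 0" by (rule aa_pos)
  note P = mons_k_props[OF a d, of "A k" k i]
  have "k \<le> n" using k nk_ge by simp
  then show ?thesis using P k gm_nk[OF K0 k(1)] by (auto simp: nk_def)
next
  case False
  have "gm A q d K0 n i = []" using False unfolding gm_def by (rule if_not_P)
  then show ?thesis by simp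
qed

definition gen :: "(nat \<Rightarrow> nat \<Rightarrow> nat \<Rightarrow> bool) \<Rightarrow> nat \<Rightarrow> nat \<Rightarrow> nat \<Rightarrow> (nat \<Rightarrow> nat) \<Rightarrow> nat \<Rightarrow> bool list \<Rightarrow> bool list" where
  "gen A q d K0 Nf n x = map (\<lambda>i. pval (gm A q d K0 n i) x) [0..<Nf n]"

lemma aa_le_k: "aa q k \<le> k + 1"
proof (cases "k = 0")
  case True then show ?thesis by (simp add: aa_def)
next
  case False
  have "real k powr (1 / real q) \<le> real k powr 1"
    using False by (intro powr_mono) (auto simp: divide_le_eq_1)
  then have "real k powr (1 / real q) \<le> real k" using False by simp
  then show ?thesis unfolding aa_def by linarith
qed

lemma nk_poly: "nk q d k + 1 \<le> (d + 1) * (k + 1) ^ 2"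
proof -
  have "nk q d k \<le> k * (1 + d * (k + 1))"
    unfolding nk_def using aa_le_k by (intro mult_left_mono add_left_mono) auto
  then show ?thesis by (simp add: power2_eq_square algebra_simps)
qed


lemma nat_floor_le_nat: "x \<le> real y \<Longrightarrow> nat \<lfloor>x\<rfloor> \<le> y"
  by linarith

theorem factB3:
  fixes eps :: real and m :: "nat \<Rightarrow> nat" and mu :: "nat \<Rightarrow> real"
    and A :: "nat \<Rightarrow> nat \<Rightarrow> nat \<Rightarrow> bool"
  assumes eps_pos: "eps > 0"
    and m_def: "\<And>n. m n = nat \<lfloor>real n powr (1 + eps)\<rfloor>"
    and mu_def: "\<And>n. mu n = real n powr (- eps)"
    and hard: "hard_NPpoly m (\<lambda>n. lpn_range (A n) (m n) n (mu n))"
  shows "\<exists>(eps'::real) (d::nat) (g :: nat \<Rightarrow> bool list \<Rightarrow> bool list).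
           eps' > 0 \<and> d \<ge> 2 \<and>
           demi_bits_gen g (\<lambda>n. nat \<lfloor>real n powr (1 + eps')\<rfloor>) \<and>
           (\<forall>n i. i < nat \<lfloor>real n powr (1 + eps')\<rfloor> \<longrightarrow>
              (\<exists>P. f2_poly_deg n d P \<and>
                   (\<forall>x. length x = n \<longrightarrow> g n x ! i = f2_poly_eval P x)))"
proof -
  define e0 where "e0 = min eps 1"
  have e0: "0 < e0" "e0 \<le> 1" "e0 \<le> eps" using eps_pos by (auto simp: e0_def)
  define eps' where "eps' = e0 / 4"
  have ep: "0 < eps'" "eps' \<le> 1" using e0 by (auto simp: eps'_def)
  define q where "q = nat \<lceil>4 / e0\<rceil>"
  have q4: "real q \<ge> 4 / e0" unfolding q_def by linarith
  have "4 / e0 \<ge> 4" using e0 by (simp add: le_divide_eq)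
  then have q4': "real q \<ge> 4" using q4 by linarith
  then have qpos: "q > 0" by simp
  have qe: "1 / real q \<le> e0 / 4"
  proof -
    have "4 \<le> e0 * real q" using q4 e0 by (simp add: divide_le_eq mult.commute)
    then show ?thesis using qpos e0 by (simp add: field_simps)
  qed
  define d where "d = nat \<lceil>real q * (1 + eps)\<rceil>"
  have dq: "real d \<ge> real q * (1 + eps)" unfolding d_def by linarith
  have "real q * 1 \<le> real q * (1 + eps)" using eps_pos by (intro mult_left_mono) auto
  then have "real q * (1 + eps) \<ge> real q" by simp
  then have "real d \<ge> 4" using dq q4' by linarith
  then have d2: "d \<ge> 2" by simp
  then have d0: "d > 0" and d1: "d \<ge> 1" by auto
  obtain K0 where K0: "K0 \<ge> 1" "\<forall>k\<ge>K0. real (k * (1 + d * aa q k)) powr (1 + eps') \<le> real k powr (1 + eps)"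
    using eventually_nk[OF qpos d1 e0 qe eps'_def] by blast
  define Nf where "Nf = (\<lambda>n. nat \<lfloor>real n powr (1 + eps')\<rfloor>)"
  define g where "g = gen A q d K0 Nf"
  note GP = gm_props[OF K0(1) d0, of A q]
  have DEG: "\<forall>n i. i < Nf n \<longrightarrow> (\<exists>P. f2_poly_deg n d P \<and>
                   (\<forall>x. length x = n \<longrightarrow> g n x ! i = f2_poly_eval P x))"
  proof (intro allI impI)
    fix n i assume i: "i < Nf n"
    let ?ms = "gm A q d K0 n i"
    have gp: "\<forall>m\<in>set ?ms. length m \<le> d \<and> (\<forall>v\<in>set m. v < n)" "distinct (map set ?ms)"
      using GP[of n i] by auto
    show "\<exists>P. f2_poly_deg n d P \<and> (\<forall>x. length x = n \<longrightarrow> g n x ! i = f2_poly_eval P x)"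
    proof (intro exI conjI allI impI)
      show "f2_poly_deg n d (set (map set ?ms))"
        unfolding f2_poly_deg_def
      proof (intro conjI ballI)
        show "set (map set ?ms) \<subseteq> Pow {0..<n}" using gp(1) by auto
        fix M assume "M \<in> set (map set ?ms)"
        then obtain mm where "mm \<in> set ?ms" "M = set mm" by auto
        then show "card M \<le> d" using gp(1) card_length[of mm] by fastforce
      qed
      fix x :: "bool list" assume lx: "length x = n"
      have "g n x ! i = pval ?ms x" using i by (simp add: g_def gen_def)
      also have "\<dots> = f2_poly_eval (set (map set ?ms)) x"
        using pval_f2[OF gp(2)] gp(1) lx by simp
      finally show "g n x ! i = f2_poly_eval (set (map set ?ms)) x" .
    qed
  qed
  have NfM: "Nf (nk q d k) \<le> m k" if "K0 \<le> k" for k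
  proof -
    have "real (nk q d k) powr (1 + eps') \<le> real k powr (1 + eps)"
      using K0(2) that by (simp add: nk_def)
    then show ?thesis unfolding Nf_def m_def by (intro nat_mono floor_mono)
  qed
  have Ma: "m k \<le> aa q k ^ d" for k
  proof -
    have "real k powr (1 + eps) \<le> real (aa q k ^ d)"
      using m_le_aa[OF qpos eps_pos dq, of k] by simp
    then show ?thesis unfolding m_def by (rule nat_floor_le_nat)
  qed
  have HARD: "hard_NPpoly Nf (\<lambda>n. g n ` strings n)"
    unfolding hard_NPpoly_def
  proof
    assume "\<exists>D \<delta>. poly_bounded (\<lambda>n. nd_size (D n)) \<and> 0 < \<delta> \<and>
        (\<forall>\<^sub>F n in sequentially. \<delta> \<le> accept_frac (D n) (Nf n) \<and> (\<forall>y\<in>g n ` strings n. \<not> nd_accepts (D n) y))"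
    then obtain D \<delta> where pb: "poly_bounded (\<lambda>n. nd_size (D n))" and dp: "0 < \<delta>"
      and ev: "\<forall>\<^sub>F n in sequentially. \<delta> \<le> accept_frac (D n) (Nf n) \<and> (\<forall>y\<in>g n ` strings n. \<not> nd_accepts (D n) y)"
      by blast
    obtain n0 where n0: "\<And>n. n \<ge> n0 \<Longrightarrow> \<delta> \<le> accept_frac (D n) (Nf n) \<and> (\<forall>y\<in>g n ` strings n. \<not> nd_accepts (D n) y)"
      using ev unfolding eventually_sequentially by blast
    obtain c where c: "\<And>n. nd_size (D n) \<le> c * (n + 1) ^ c" using pb unfolding poly_bounded_def by blast
    define D' where "D' k = (if K0 \<le> k then (map (shiftf (sig (Nf (nk q d k)) (m k))) (fst (D (nk q d k))),
                            snd (D (nk q d k))) else ([], 0))" for k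
    define C where "C = c * (d + 1) ^ c + 2 * c"
    have PB: "poly_bounded (\<lambda>k. nd_size (D' k))"
      unfolding poly_bounded_def
    proof (intro exI allI)
      fix k
      show "nd_size (D' k) \<le> C * (k + 1) ^ C"
      proof (cases "K0 \<le> k")
        case True
        have "nd_size (D' k) = nd_size (D (nk q d k))"
          using True by (simp add: D'_def nd_size_def)
        also have "\<dots> \<le> c * (nk q d k + 1) ^ c" by (rule c)
        also have "\<dots> \<le> c * ((d + 1) * (k + 1) ^ 2) ^ c"
          by (intro mult_left_mono power_mono nk_poly) auto
        also have "\<dots> = (c * (d + 1) ^ c) * (k + 1) ^ (2 * c)"
          unfolding power_mult_distrib power_mult by (simp only: mult.assoc)
        also have "\<dots> \<le> C * (k + 1) ^ C"
        proof (intro mult_mono)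
          show "c * (d + 1) ^ c \<le> C" by (simp add: C_def)
          show "(k + 1) ^ (2 * c) \<le> (k + 1) ^ C" by (intro power_increasing) (auto simp: C_def)
        qed auto
        finally show ?thesis .
      next
        case False
        then show ?thesis by (simp add: D'_def nd_size_def)
      qed
    qed
    have EV: "\<forall>\<^sub>F k in sequentially. \<delta> \<le> accept_frac (D' k) (m k) \<and>
               (\<forall>y\<in>lpn_range (A k) (m k) k (mu k). \<not> nd_accepts (D' k) y)"
      unfolding eventually_sequentially
    proof (intro exI allI impI)
      fix k assume kk: "max K0 n0 \<le> k"
      then have kK: "K0 \<le> k" and kn: "n0 \<le> k" by auto
      have k1: "k \<ge> 1" using kK K0(1) by simp
      define n where "n = nk q d k"
      have nn0: "n0 \<le> n" using kn nk_ge[of k q d] by (simp add: n_def)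
      have NM: "Nf n \<le> m k" using NfM[OF kK] by (simp add: n_def)
      have D'k: "D' k = (map (shiftf (sig (Nf n) (m k))) (fst (D n)), snd (D n))"
        using kK by (simp add: D'_def n_def)
      note N0 = n0[OF nn0]
      show "\<delta> \<le> accept_frac (D' k) (m k) \<and> (\<forall>y\<in>lpn_range (A k) (m k) k (mu k). \<not> nd_accepts (D' k) y)"
      proof (intro conjI ballI)
        show "\<delta> \<le> accept_frac (D' k) (m k)"
          unfolding D'k accept_frac_shift[OF NM] using N0 by simp
        fix y assume "y \<in> lpn_range (A k) (m k) k (mu k)"
        then obtain s e where y: "y = lin_F2 (A k) (m k) k s e" and s: "length s = k"
          and e: "length e = m k" and w: "real (hamming_weight e) \<le> mu k * real (m k)"
          unfolding lpn_range_def by blast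
        have ly: "length y = m k" by (simp add: y lin_F2_def)
        have hw: "hamming_weight e \<le> k"
        proof -
          have "real (m k) \<le> real k powr (1 + eps)" unfolding m_def using k1 by simp
          then have "mu k * real (m k) \<le> real k powr (- eps) * real k powr (1 + eps)"
            unfolding mu_def by (intro mult_left_mono) auto
          also have "\<dots> = real k" using k1 by (simp add: powr_add[symmetric])
          finally show ?thesis using w by linarith
        qed
        have Na: "Nf n \<le> aa q k ^ d" using NM Ma[of k] by linarith
        obtain x where lx: "length x = k * (1 + d * aa q k)"
          and gx: "map (\<lambda>i. pval (mons_k (A k) k d (aa q k) i) x) [0..<Nf n] = take (Nf n) y"
          using cover[OF aa_pos d0 Na s e NM hw, of "A k"] unfolding y by blast
        have "g n x = map (\<lambda>i. pval (mons_k (A k) k d (aa q k) i) x) [0..<Nf n]"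
          unfolding g_def gen_def n_def using gm_nk[OF K0(1) kK] by simp
        then have gx': "g n x = take (Nf n) y" using gx by simp
        have "x \<in> strings n" using lx by (simp add: strings_def n_def nk_def)
        then have "g n x \<in> g n ` strings n" by (rule imageI)
        then have "\<not> nd_accepts (D n) (g n x)" using N0 by blast
        then have "\<not> nd_accepts (D n) (take (Nf n) y)" unfolding gx' .
        then show "\<not> nd_accepts (D' k) y"
          unfolding D'k using nd_accepts_shift[OF ly NM] by simp
      qed
    qed
    show False using hard PB dp EV unfolding hard_NPpoly_def by blast
  qed
  have CIRC: "\<exists>C :: nat \<Rightarrow> gate list \<times> nat list.
          poly_bounded (\<lambda>n. length (fst (C n))) \<and>
          (\<forall>n x. length x = n \<longrightarrow> mcirc_eval (C n) x = g n x)"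
  proof (intro exI conjI)
    define C where "C n = polys_c [] (map (gm A q d K0 n) [0..<Nf n])" for n
    have spec: "(\<exists>hs. fst (C n) = [] @ hs) \<and> (\<forall>w\<in>set (snd (C n)). w < length (fst (C n))) \<and>
       map (wire (wire_vals (fst (C n)) x)) (snd (C n)) = map (\<lambda>p. pval p x) (map (gm A q d K0 n) [0..<Nf n]) \<and>
       length (fst (C n)) \<le> length [] + length (map (gm A q d K0 n) [0..<Nf n]) * (1 + (2 * n) * (2 * d + 6))"
      for n x
    proof -
      have e: "polys_c [] (map (gm A q d K0 n) [0..<Nf n]) = (fst (C n), snd (C n))" by (simp add: C_def)
      have c1: "\<forall>p\<in>set (map (gm A q d K0 n) [0..<Nf n]). \<forall>m\<in>set p. length m \<le> d" using GP by auto
      have c2: "\<forall>p\<in>set (map (gm A q d K0 n) [0..<Nf n]). length p \<le> 2 * n" using GP by auto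
      show ?thesis using polys_c_spec[OF e c1 c2, of x] by simp
    qed
    show "\<forall>n x. length x = n \<longrightarrow> mcirc_eval (C n) x = g n x"
      using spec by (simp add: mcirc_eval_def g_def gen_def)
    show "poly_bounded (\<lambda>n. length (fst (C n)))"
      unfolding poly_bounded_def
    proof (intro exI allI)
      fix n
      have "length (fst (C n)) \<le> Nf n * (1 + (2 * n) * (2 * d + 6))"
        using spec[of n "[]"] by simp
      also have "\<dots> \<le> (n + 1) ^ 2 * ((4 * d + 13) * (n + 1))"
      proof (intro mult_mono)
        show "Nf n \<le> (n + 1) ^ 2" unfolding Nf_def by (rule N_le_sq[OF ep])
        show "1 + 2 * n * (2 * d + 6) \<le> (4 * d + 13) * (n + 1)" by (simp add: algebra_simps)
      qed auto
      also have "\<dots> = (4 * d + 13) * (n + 1) ^ 3" by (simp only: power2_eq_square power3_eq_cube mult.assoc mult.left_commute)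
      also have "\<dots> \<le> (4 * d + 13) * (n + 1) ^ (4 * d + 13)"
        by (intro mult_left_mono power_increasing) auto
      finally show "length (fst (C n)) \<le> (4 * d + 13) * (n + 1) ^ (4 * d + 13)" .
    qed
  qed
  have NGT: "\<forall>\<^sub>F n in sequentially. n < Nf n"
  proof -
    obtain n1 where "\<forall>n\<ge>n1. n < nat \<lfloor>real n powr (1 + eps')\<rfloor>" using eventually_Ngt[OF ep(1)] by blast
    then show ?thesis unfolding eventually_sequentially Nf_def by blast
  qed
  have DB: "demi_bits_gen g Nf"
    unfolding demi_bits_gen_def using NGT CIRC HARD by (simp add: g_def gen_def)
  show ?thesis
    using ep(1) d2 DB DEG unfolding Nf_def by blast
qed

end
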